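(* Let $\gamma\ge1$, $n\in\mathbb{N}^*$, $\lambda_n=\lambda_{n,\gamma}$ and $x_n=\big(\lambda_n/(n\pi)^2\big)^{1/(2\gamma)}$, and assume $x_n<1$. Define $$\mu_n=\min\Big\{\frac{n\pi}{\gamma+1},\ \frac{\gamma}{\gamma+1}\Big(\frac{(n\pi)^2}{\lambda_n}\Big)^{\frac12+\frac1{2\gamma}}\Big\},\qquad C_n=\frac{2\lambda_ne^{\mu_nx_n^{\gamma+1}}}{(\gamma+1)\mu_nx_n^{\gamma-\frac12}},\qquad W_n(x)=C_ne^{-\mu_nx^{\gamma+1}}.$$ Then $W_n$ satisfies $-W_n''(x)+[(n\pi)^2x^{2\gamma}-\lambda_n]W_n(x)\ge0$ for all $x\in(x_n,1)$, $W_n(1)\ge0$, and $W_n'(x_n)<-\sqrt{x_n}\,\lambda_n$.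
   Context: $\lambda_{n,\gamma}$ is the smallest eigenvalue of the operator $A_{n,\gamma}\varphi=-\varphi''+(n\pi)^2|x|^{2\gamma}\varphi$ with domain $H^2(-1,1)\cap H^1_0(-1,1)$ (in particular $\lambda_n>0$). *)

theory Defs
  imports "HOL-Analysis.Analysis"
begin

text \<open>Eigenvalue of A_{n,gamma} phi = -phi'' + (n pi)^2 |x|^(2 gamma) phi on (-1,1)
  with Dirichlet boundary conditions phi(-1) = phi(1) = 0.  Eigenfunctions are taken
  to be C^2 on [-1,1]; since the potential is continuous, every H^2 cap H^1_0
  eigenfunction is C^2 (the equation gives phi'' = (q - lambda) phi continuous),
  so this is the same set of eigenvalues.\<close>

definition is_eigenvalue :: "real \<Rightarrow> nat \<Rightarrow> real \<Rightarrow> bool" where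
  "is_eigenvalue \<gamma> n l \<longleftrightarrow>
     (\<exists>\<phi> \<phi>' \<phi>''. (\<forall>x\<in>{-1..1}. (\<phi> has_real_derivative \<phi>' x) (at x within {-1..1}))
        \<and> (\<forall>x\<in>{-1..1}. (\<phi>' has_real_derivative \<phi>'' x) (at x within {-1..1}))
        \<and> continuous_on {-1..1} \<phi>''
        \<and> \<phi> (-1) = 0 \<and> \<phi> 1 = 0
        \<and> (\<exists>x\<in>{-1..1}. \<phi> x \<noteq> 0)
        \<and> (\<forall>x\<in>{-1..1}. - \<phi>'' x + (real n * pi)^2 * (\<bar>x\<bar> powr (2 * \<gamma>)) * \<phi> x = l * \<phi> x))"

definition lam :: "real \<Rightarrow> nat \<Rightarrow> real" where
  "lam \<gamma> n = (THE l. is_eigenvalue \<gamma> n l \<and> (\<forall>m. is_eigenvalue \<gamma> n m \<longrightarrow> l \<le> m))"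

end

theory Submission
  imports Defs
begin


definition Top :: "(real\<Rightarrow>real) \<Rightarrow> (real\<Rightarrow>real) \<Rightarrow> real \<Rightarrow> real" where
 "Top p f x = (x+1) + integral {-1..x} (\<lambda>s. integral {-1..s} (\<lambda>t. p t * f t))"

lemma cont_indef:
  fixes g :: "real \<Rightarrow> real"
  assumes "continuous_on {-1..1} g"
  shows "continuous_on {-1..1} (\<lambda>s. integral {-1..s} g)"
  by (rule indefinite_integral_continuous_1) (simp add: assms integrable_continuous_real)

lemma Top_cont:
  assumes "continuous_on {-1..1} p" "continuous_on {-1..1} f"
  shows "continuous_on {-1..1} (Top p f)"
proof -
  have "continuous_on {-1..1} (\<lambda>t. p t * f t)" using assms by (intro continuous_intros)
  then have "continuous_on {-1..1} (\<lambda>s. integral {-1..s} (\<lambda>t. p t * f t))" by (rule cont_indef)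
  then have "continuous_on {-1..1} (\<lambda>x. integral {-1..x} (\<lambda>s. integral {-1..s} (\<lambda>t. p t * f t)))"
    by (rule cont_indef)
  then show ?thesis unfolding Top_def by (intro continuous_intros)
qed

lemma int_pow:
  assumes "-1 \<le> s"
  shows "((\<lambda>t. (t+1)^k) has_integral ((s+1)^(k+1)/(k+1))) {-1..s}"
proof -
  have d: "((\<lambda>t::real. (t+1)^(Suc k)/(Suc k)) has_real_derivative ((t+1)^k)) (at t within S)" for t S
  proof -
    have "((\<lambda>t::real. (t+1)^(Suc k)) has_real_derivative (real (Suc k) * (t+1)^k * 1)) (at t within S)"
      by (rule DERIV_power_Suc[THEN DERIV_cong]) (auto intro!: derivative_eq_intros)
    from DERIV_cdivide[OF this, of "Suc k"] show ?thesis by (simp del: of_nat_Suc)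
  qed
  have "((\<lambda>t. (t+1)^k) has_integral ((\<lambda>t. (t+1)^(Suc k)/(Suc k)) s - (\<lambda>t. (t+1)^(Suc k)/(Suc k)) (-1))) {-1..s}"
    apply (rule fundamental_theorem_of_calculus[OF assms])
    apply (rule has_real_derivative_iff_has_vector_derivative[THEN iffD1])
    apply (rule d)
    done
  then show ?thesis by simp
qed

lemma int_bound:
  assumes g: "continuous_on {-1..1} g" and s: "s \<in> {-1..1}"
    and b: "\<And>t. t \<in> {-1..1} \<Longrightarrow> \<bar>g t\<bar> \<le> c * (t+1)^k"
  shows "\<bar>integral {-1..s} g\<bar> \<le> c * (s+1)^(k+1)/(k+1)"
proof -
  have sub: "{-1..s} \<subseteq> {-1..1}" using s by auto
  have "norm (integral {-1..s} g) \<le> integral {-1..s} (\<lambda>t. c * (t+1)^k)"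
    apply (rule integral_norm_bound_integral)
      apply (rule integrable_continuous_real, rule continuous_on_subset[OF g sub])
     apply (rule integrable_continuous_real, intro continuous_intros)
    using b sub by auto
  also have "\<dots> = c * ((s+1)^(k+1)/(k+1))"
    using int_pow[of s k] s by (simp add: integral_mult_right integral_unique)
  finally show ?thesis by simp
qed

lemma Top_diff:
  assumes p: "continuous_on {-1..1} p" and f: "continuous_on {-1..1} f" and g: "continuous_on {-1..1} g"
    and M: "\<And>t. t \<in> {-1..1} \<Longrightarrow> \<bar>p t\<bar> \<le> M"
    and b: "\<And>t. t \<in> {-1..1} \<Longrightarrow> \<bar>f t - g t\<bar> \<le> c * (t+1)^k"
    and x: "x \<in> {-1..1}" and c: "c \<ge> 0"
  shows "\<bar>Top p f x - Top p g x\<bar> \<le> M * c * (x+1)^(k+2) / ((k+1)*(k+2))"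
proof -
  define h where "h t = p t * (f t - g t)" for t
  have hc: "continuous_on {-1..1} h" unfolding h_def using p f g by (intro continuous_intros)
  have inner: "\<And>s. s \<in> {-1..1} \<Longrightarrow> integral {-1..s} (\<lambda>t. p t * f t) - integral {-1..s} (\<lambda>t. p t * g t) = integral {-1..s} h"
  proof -
    fix s :: real assume s: "s \<in> {-1..1}"
    have sub: "{-1..s} \<subseteq> {-1..1}" using s by auto
    have i1: "(\<lambda>t. p t * f t) integrable_on {-1..s}"
      by (rule integrable_continuous_real, rule continuous_on_subset[OF _ sub], use p f in \<open>intro continuous_intros\<close>)
    have i2: "(\<lambda>t. p t * g t) integrable_on {-1..s}"
      by (rule integrable_continuous_real, rule continuous_on_subset[OF _ sub], use p g in \<open>intro continuous_intros\<close>)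
    show "?thesis s" unfolding h_def using integral_diff[OF i1 i2] by (simp add: algebra_simps)
  qed
  have ci1: "continuous_on {-1..1} (\<lambda>s. integral {-1..s} (\<lambda>t. p t * f t))"
    by (rule cont_indef) (use p f in \<open>intro continuous_intros\<close>)
  have ci2: "continuous_on {-1..1} (\<lambda>s. integral {-1..s} (\<lambda>t. p t * g t))"
    by (rule cont_indef) (use p g in \<open>intro continuous_intros\<close>)
  have sub: "{-1..x} \<subseteq> {-1..1}" using x by auto
  have "Top p f x - Top p g x = integral {-1..x} (\<lambda>s. integral {-1..s} (\<lambda>t. p t * f t)) - integral {-1..x} (\<lambda>s. integral {-1..s} (\<lambda>t. p t * g t))"
    unfolding Top_def by simp
  also have "\<dots> = integral {-1..x} (\<lambda>s. integral {-1..s} (\<lambda>t. p t * f t) - integral {-1..s} (\<lambda>t. p t * g t))"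
    by (rule integral_diff[symmetric]; rule integrable_continuous_real; rule continuous_on_subset[OF _ sub]; simp add: ci1 ci2)
  also have "\<dots> = integral {-1..x} (\<lambda>s. integral {-1..s} h)"
    by (rule integral_cong) (use inner sub in auto)
  finally have eq: "Top p f x - Top p g x = integral {-1..x} (\<lambda>s. integral {-1..s} h)" .
  have hb: "\<And>t. t \<in> {-1..1} \<Longrightarrow> \<bar>h t\<bar> \<le> (M*c) * (t+1)^k"
  proof -
    fix t :: real assume t: "t \<in> {-1..1}"
    have "\<bar>h t\<bar> = \<bar>p t\<bar> * \<bar>f t - g t\<bar>" unfolding h_def by (simp add: abs_mult)
    also have "\<dots> \<le> M * (c * (t+1)^k)"
      by (rule mult_mono) (use M[OF t] b[OF t] in auto)
    finally show "\<bar>h t\<bar> \<le> (M*c) * (t+1)^k" by simp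
  qed
  have hb2: "\<And>s. s \<in> {-1..1} \<Longrightarrow> \<bar>integral {-1..s} h\<bar> \<le> (M*c/(k+1)) * (s+1)^(k+1)"
    using int_bound[OF hc _ hb] by (simp add: field_simps)
  have "\<bar>integral {-1..x} (\<lambda>s. integral {-1..s} h)\<bar> \<le> (M*c/(k+1)) * (x+1)^(k+1+1)/(k+1+1)"
    by (rule int_bound[OF cont_indef[OF hc] x hb2])
  then show ?thesis unfolding eq by (simp add: field_simps)
qed


fun pic :: "(real\<Rightarrow>real) \<Rightarrow> nat \<Rightarrow> real \<Rightarrow> real" where
  "pic p 0 = (\<lambda>x. 0)" | "pic p (Suc k) = Top p (pic p k)"

lemma pic_cont: "continuous_on {-1..1} p \<Longrightarrow> continuous_on {-1..1} (pic p k)"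
  by (induction k) (auto intro: Top_cont)

lemma pic_bound:
  assumes p: "continuous_on {-1..1} p" and M: "\<And>t. t \<in> {-1..1} \<Longrightarrow> \<bar>p t\<bar> \<le> M" and M0: "M \<ge> 0"
  shows "\<forall>x\<in>{-1..1}. \<bar>pic p (Suc k) x - pic p k x\<bar> \<le> (M^k / fact (2*k+1)) * (x+1)^(2*k+1)"
proof (induction k)
  case 0
  show ?case by (simp add: Top_def)
next
  case (Suc k)
  show ?case
  proof
    fix x :: real assume x: "x \<in> {-1..1}"
    have "\<bar>Top p (pic p (Suc k)) x - Top p (pic p k) x\<bar> \<le> M * (M^k / fact (2*k+1)) * (x+1)^(2*k+1+2) / ((2*k+1+1)*(2*k+1+2))"
      by (rule Top_diff[OF p pic_cont[OF p] pic_cont[OF p] M _ x]) (use Suc M0 in auto)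
    also have "\<dots> = (M^(Suc k) / fact (2*(Suc k)+1)) * (x+1)^(2*(Suc k)+1)"
    proof -
      have f: "fact (2*(Suc k)+1) = (real (2*k+2) * real (2*k+3)) * (fact (2*k+1) :: real)"
        by (simp add: fact_Suc algebra_simps)
      show ?thesis unfolding f by (simp add: field_simps)
    qed
    finally show "\<bar>pic p (Suc (Suc k)) x - pic p (Suc k) x\<bar> \<le> (M^(Suc k) / fact (2*(Suc k)+1)) * (x+1)^(2*(Suc k)+1)"
      by simp
  qed
qed

definition sol :: "(real\<Rightarrow>real) \<Rightarrow> (real\<Rightarrow>real) \<Rightarrow> (real\<Rightarrow>real) \<Rightarrow> bool" where
  "sol p \<phi> \<psi> \<longleftrightarrow> \<phi> (-1) = 0 \<and> \<psi> (-1) = 1 \<and>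
     (\<forall>x\<in>{-1..1}. (\<phi> has_real_derivative \<psi> x) (at x within {-1..1}) \<and>
        (\<psi> has_real_derivative p x * \<phi> x) (at x within {-1..1}))"

lemma ode_exists:
  assumes p: "continuous_on {-1..1} p"
  shows "\<exists>\<phi> \<psi>. sol p \<phi> \<psi>"
proof -
  obtain M0 where M0: "\<forall>x\<in>p ` {-1..1}. norm x \<le> M0"
    using compact_continuous_image[OF p compact_Icc, THEN compact_imp_bounded] unfolding bounded_iff by blast
  define M where "M = max M0 0"
  have M: "\<And>t. t \<in> {-1..1} \<Longrightarrow> \<bar>p t\<bar> \<le> M" using M0 unfolding M_def by force
  have Mnn: "M \<ge> 0" unfolding M_def by simp
  define d where "d j x = pic p (Suc j) x - pic p j x" for j x
  have db: "\<bar>d j x\<bar> \<le> 2 * (inverse (fact j) * (4*M)^j)" if x: "x \<in> {-1..1}" for j x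
  proof -
    have "\<bar>d j x\<bar> \<le> (M^j / fact (2*j+1)) * (x+1)^(2*j+1)"
      using pic_bound[OF p M Mnn] x unfolding d_def by blast
    also have "\<dots> \<le> (M^j / fact j) * 2^(2*j+1)"
    proof (rule mult_mono)
      show "M ^ j / fact (2 * j + 1) \<le> M ^ j / fact j"
      proof (rule divide_left_mono)
        show "fact j \<le> (fact (2 * j + 1) :: real)" by (rule fact_mono) simp
        show "0 \<le> M ^ j" using Mnn by simp
        show "0 < (fact (2 * j + 1) :: real) * fact j" by (simp del: fact_Suc)
      qed
      show "(x + 1) ^ (2 * j + 1) \<le> 2 ^ (2 * j + 1)" by (rule power_mono) (use x in auto)
    qed (use x in \<open>auto simp: Mnn\<close>)
    also have "\<dots> = 2 * (inverse (fact j) * (4*M)^j)"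
    proof -
      have "(2::real)^(2*j+1) = 2 * 4^j" by (simp add: power_mult)
      then show ?thesis by (simp add: power_mult_distrib field_simps)
    qed
    finally show ?thesis .
  qed
  have sm: "summable (\<lambda>j. 2 * (inverse (fact j) * (4*M)^j))"
    by (rule summable_mult) (rule summable_exp)
  have ul0: "uniform_limit {-1..1} (\<lambda>k x. \<Sum>i<k. d i x) (\<lambda>x. suminf (\<lambda>i. d i x)) sequentially"
    by (rule Weierstrass_m_test[OF _ sm]) (use db in auto)
  define \<phi> where "\<phi> x = suminf (\<lambda>i. d i x)" for x
  have tel: "(\<lambda>k x. \<Sum>i<k. d i x) = (\<lambda>k. pic p k)"
    unfolding d_def
  proof (intro ext)
    fix k x
    show "(\<Sum>i<k. pic p (Suc i) x - pic p i x) = pic p k x"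
      using sum_lessThan_telescope[of "\<lambda>i. pic p i x" k] by simp
  qed
  have ul: "uniform_limit {-1..1} (\<lambda>k. pic p k) \<phi> sequentially"
    using ul0 unfolding tel \<phi>_def .
  have phic: "continuous_on {-1..1} \<phi>"
    by (rule uniform_limit_theorem[OF _ ul]) (auto intro!: always_eventually pic_cont[OF p])
  have fixp: "Top p \<phi> x = \<phi> x" if x: "x \<in> {-1..1}" for x
  proof -
    have l1: "(\<lambda>k. pic p (Suc k) x) \<longlonglongrightarrow> \<phi> x"
      using tendsto_uniform_limitI[OF ul x] by (rule LIMSEQ_Suc)
    have l2: "(\<lambda>k. pic p (Suc k) x) \<longlonglongrightarrow> Top p \<phi> x"
    proof (rule tendstoI)
      fix e :: real assume e: "e > 0"
      define e' where "e' = e / (2*M+1)"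
      have e': "e' > 0" using e Mnn unfolding e'_def by simp
      have ev: "\<forall>\<^sub>F k in sequentially. \<forall>t\<in>{-1..1}. dist (pic p k t) (\<phi> t) < e'"
        using ul e' unfolding uniform_limit_iff by blast
      show "\<forall>\<^sub>F k in sequentially. dist (pic p (Suc k) x) (Top p \<phi> x) < e"
        using ev
      proof eventually_elim
        case (elim k)
        have "\<bar>Top p (pic p k) x - Top p \<phi> x\<bar> \<le> M * e' * (x+1)^(0+2) / real ((0+1)*(0+2))"
          by (rule Top_diff[OF p pic_cont[OF p] phic M _ x]) (use elim e' in \<open>auto simp: dist_real_def less_imp_le\<close>)
        then have "\<bar>Top p (pic p k) x - Top p \<phi> x\<bar> \<le> M * e' * (x+1)^2 / 2" by (simp add: power2_eq_square)
        also have "M * e' * (x+1)^2 / 2 \<le> M * e' * 4 / 2"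
        proof -
          have "(x+1)^2 \<le> 2^2" by (rule power_mono) (use x in auto)
          then show ?thesis using Mnn e' mult_left_mono[of "(x+1)^2" 4 "M*e'"] by (simp add: algebra_simps)
        qed
        also have "\<dots> < e" using e Mnn unfolding e'_def by (simp add: field_simps)
        finally show ?case by (simp add: dist_real_def)
      qed
    qed
    show ?thesis using LIMSEQ_unique[OF l2 l1] .
  qed
  define G where "G s = integral {-1..s} (\<lambda>t. p t * \<phi> t)" for s
  have Gc: "continuous_on {-1..1} G" unfolding G_def
    by (rule cont_indef) (use p phic in \<open>intro continuous_intros\<close>)
  define \<psi> where "\<psi> x = 1 + G x" for x
  have "sol p \<phi> \<psi>"
    unfolding sol_def
  proof (intro conjI ballI)
    show "\<phi> (-1) = 0" using fixp[of "-1"] by (simp add: Top_def)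
    show "\<psi> (-1) = 1" by (simp add: \<psi>_def G_def)
  next
    fix x :: real assume x: "x \<in> {-1..1}"
    have "((\<lambda>x. x + 1 + integral {-1..x} G) has_real_derivative 1 + G x) (at x within {-1..1})"
      by (rule derivative_eq_intros integral_has_real_derivative[OF Gc x] | simp)+
    then have "(Top p \<phi> has_real_derivative \<psi> x) (at x within {-1..1})"
      unfolding Top_def \<psi>_def G_def by simp
    then show "(\<phi> has_real_derivative \<psi> x) (at x within {-1..1})"
      by (rule has_field_derivative_transform_within[where d=1]) (use x fixp in auto)
    have Gd: "(G has_real_derivative p x * \<phi> x) (at x within {-1..1})"
      unfolding G_def by (rule integral_has_real_derivative[OF _ x]) (use p phic in \<open>intro continuous_intros\<close>)
    then show "(\<psi> has_real_derivative p x * \<phi> x) (at x within {-1..1})"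
      unfolding \<psi>_def using DERIV_add[OF DERIV_const[of 1] Gd] by simp
  qed
  then show ?thesis by blast
qed



lemma mono_deriv:
  fixes f :: "real \<Rightarrow> real"
  assumes d: "\<And>z. z\<in>{a..b} \<Longrightarrow> (f has_real_derivative f' z) (at z within S)"
    and S: "{a..b} \<subseteq> S" and nn: "\<And>z. z\<in>{a..b} \<Longrightarrow> f' z \<ge> 0"
    and xy: "a \<le> x" "x \<le> y" "y \<le> b"
  shows "f x \<le> f y"
proof (rule DERIV_nonneg_imp_increasing_open[OF xy(2)])
  fix z assume z: "x < z" "z < y"
  have zi: "z \<in> interior S"
    using interior_mono[OF S] z xy by auto
  have "(f has_real_derivative f' z) (at z)"
    using d[of z] z xy at_within_interior[OF zi] by auto
  then show "\<exists>y. (f has_real_derivative y) (at z) \<and> 0 \<le> y" using nn[of z] z xy by auto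
next
  show "continuous_on {x..y} f"
    unfolding continuous_on_eq_continuous_within
  proof
    fix z assume z: "z \<in> {x..y}"
    have "continuous (at z within S) f" using d[of z] z xy by (auto intro: DERIV_continuous)
    then show "continuous (at z within {x..y}) f"
      by (rule continuous_within_subset) (use S xy in auto)
  qed
qed

lemma gronwall:
  fixes E :: "real \<Rightarrow> real"
  assumes K: "K > 0" and c: "c \<ge> 0"
    and d: "\<And>z. z\<in>{a..b} \<Longrightarrow> (E has_real_derivative E' z) (at z within {a..b})"
    and le: "\<And>z. z\<in>{a..b} \<Longrightarrow> E' z \<le> K * E z + c"
    and x: "x \<in> {a..b}"
  shows "E x + c/K \<le> (E a + c/K) * exp (K*(x-a))"
proof -
  define h where "h y = - ((E y + c/K) * exp (-K*(y-a)))" for y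
  have hd: "(h has_real_derivative (exp (-K*(z-a)) * (K * E z + c - E' z))) (at z within {a..b})"
    if z: "z \<in> {a..b}" for z
    unfolding h_def
    by (rule derivative_eq_intros d[OF z] refl | simp)+ (use K in \<open>simp add: field_simps\<close>)
  have "h a \<le> h x"
    by (rule mono_deriv[OF hd]) (use x le in \<open>auto intro!: mult_nonneg_nonneg\<close>)
  then have "(E x + c/K) * exp (-K*(x-a)) \<le> E a + c/K" unfolding h_def by simp
  then have "(E x + c/K) * exp (-K*(x-a)) * exp (K*(x-a)) \<le> (E a + c/K) * exp (K*(x-a))"
    by (rule mult_right_mono) simp
  moreover have e1: "exp (-K*(x-a)) * exp (K*(x-a)) = 1" by (simp add: exp_add[symmetric])
  ultimately show ?thesis by (simp only: mult.assoc e1 mult_1_right)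
qed

lemma gronwall_back:
  fixes E :: "real \<Rightarrow> real"
  assumes d: "\<And>z. z\<in>{a..b} \<Longrightarrow> (E has_real_derivative E' z) (at z within {a..b})"
    and ge: "\<And>z. z\<in>{a..b} \<Longrightarrow> E' z \<ge> - K * E z"
    and x0: "x0 \<in> {a..b}" "E x0 = 0" and x: "a \<le> x" "x \<le> x0"
  shows "E x \<le> 0"
proof -
  define h where "h y = E y * exp (K*y)" for y
  have hd: "(h has_real_derivative (exp (K*z) * (E' z + K * E z))) (at z within {a..b})"
    if z: "z \<in> {a..b}" for z
    unfolding h_def
    by (rule derivative_eq_intros d[OF z] refl | simp)+ (simp add: field_simps)
  have "h x \<le> h x0"
  proof (rule mono_deriv[OF hd])
    fix z assume "z \<in> {a..b}"
    then show "0 \<le> exp (K*z) * (E' z + K * E z)" using ge[of z] by simp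
  qed (use x x0 in auto)
  then have "E x * exp (K*x) \<le> 0" unfolding h_def using x0 by simp
  then show ?thesis by (simp add: mult_le_0_iff)
qed

lemma sq_ineq1: fixes u w :: real shows "2*u*w \<le> u^2 + w^2"
  using sum_squares_ge_zero[of "u-w" 0] by (simp add: power2_eq_square algebra_simps)

lemma sq_ineq2:
  fixes m M u w :: real
  assumes "\<bar>m\<bar> \<le> M"
  shows "2*m*u*w \<le> M*(u^2 + w^2)" "2*m*u*w \<ge> - M*(u^2 + w^2)"
proof -
  have "2*\<bar>u\<bar>*\<bar>w\<bar> \<le> u^2+w^2" using sq_ineq1[of "\<bar>u\<bar>" "\<bar>w\<bar>"] by simp
  moreover have "\<bar>2*m*u*w\<bar> \<le> M * (2*\<bar>u\<bar>*\<bar>w\<bar>)"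
    using mult_right_mono[OF assms, of "2*\<bar>u\<bar>*\<bar>w\<bar>"] by (simp add: abs_mult algebra_simps)
  moreover have "M \<ge> 0" using assms by simp
  ultimately have "\<bar>2*m*u*w\<bar> \<le> M*(u^2+w^2)"
    by (meson mult_left_mono order_trans)
  then show "2*m*u*w \<le> M*(u^2 + w^2)" "2*m*u*w \<ge> - M*(u^2 + w^2)" by auto
qed

lemma sol_E_deriv:
  assumes s: "sol p \<phi> \<psi>" and z: "z \<in> {-1..1}"
  shows "((\<lambda>x. (\<phi> x)^2 + (\<psi> x)^2) has_real_derivative (2*\<phi> z*\<psi> z + 2*p z*\<psi> z*\<phi> z)) (at z within {-1..1})"
proof -
  have d1: "(\<phi> has_real_derivative \<psi> z) (at z within {-1..1})" and d2: "(\<psi> has_real_derivative p z * \<phi> z) (at z within {-1..1})"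
    using s z unfolding sol_def by auto
  show ?thesis
    by (rule derivative_eq_intros d1 d2 refl | simp add: algebra_simps)+
qed

lemma sol_bound:
  assumes s: "sol p \<phi> \<psi>" and M: "\<And>t. t\<in>{-1..1} \<Longrightarrow> \<bar>p t\<bar> \<le> M" and x: "x \<in> {-1..1}"
  shows "\<bar>\<phi> x\<bar> \<le> exp (1+M) \<and> \<bar>\<psi> x\<bar> \<le> exp (1+M)"
proof -
  have M0: "M \<ge> 0" using M[of 0] by simp
  define E where "E x = (\<phi> x)^2 + (\<psi> x)^2" for x
  have "E x + 0/(1+M) \<le> (E (-1) + 0/(1+M)) * exp ((1+M)*(x-(-1)))"
  proof (rule gronwall[where E'="\<lambda>z. 2*\<phi> z*\<psi> z + 2*p z*\<psi> z*\<phi> z"])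
    show "1 + M > 0" using M0 by simp
    fix z :: real assume z: "z \<in> {-1..1}"
    show "(E has_real_derivative 2*\<phi> z*\<psi> z + 2*p z*\<psi> z*\<phi> z) (at z within {-1..1})"
      unfolding E_def by (rule sol_E_deriv[OF s z])
    show "2*\<phi> z*\<psi> z + 2*p z*\<psi> z*\<phi> z \<le> (1+M) * E z + 0"
      using sq_ineq1[of "\<phi> z" "\<psi> z"] sq_ineq2(1)[OF M[OF z], of "\<psi> z" "\<phi> z"] unfolding E_def
      by (simp add: algebra_simps)
  qed (use x in auto)
  moreover have "E (-1) = 1" using s unfolding sol_def E_def by simp
  ultimately have "E x \<le> exp ((1+M)*(x+1))" by simp
  also have "\<dots> \<le> exp ((1+M)*2)" using x M0 by (intro exp_le_cancel_iff[THEN iffD2] mult_left_mono) auto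
  also have "\<dots> = (exp (1+M))^2" by (simp add: power2_eq_square exp_add[symmetric] algebra_simps)
  finally have "E x \<le> (exp (1+M))^2" .
  then have "(\<phi> x)^2 \<le> (exp (1+M))^2" "(\<psi> x)^2 \<le> (exp (1+M))^2" unfolding E_def
    using zero_le_power2[of "\<phi> x"] zero_le_power2[of "\<psi> x"] by linarith+
  then show ?thesis by (auto simp: abs_le_square_iff[symmetric])
qed

lemma sol_no_double_zero:
  assumes s: "sol p \<phi> \<psi>" and M: "\<And>t. t\<in>{-1..1} \<Longrightarrow> \<bar>p t\<bar> \<le> M"
    and x0: "x0 \<in> {-1..1}" "\<phi> x0 = 0" "\<psi> x0 = 0"
  shows False
proof -
  define E where "E x = (\<phi> x)^2 + (\<psi> x)^2" for x
  define E' where "E' z = 2*\<phi> z*\<psi> z + 2*p z*\<psi> z*\<phi> z" for z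
  have d: "(E has_real_derivative E' z) (at z within {-1..1})" if z: "z \<in> {-1..1}" for z
    unfolding E_def E'_def by (rule sol_E_deriv[OF s z])
  have ge: "E' z \<ge> - (1+M) * E z" if z: "z \<in> {-1..1}" for z
  proof -
    have "2*\<phi> z*\<psi> z \<ge> - ((\<phi> z)^2 + (\<psi> z)^2)"
      using sq_ineq1[of "-\<phi> z" "\<psi> z"] by simp
    then show ?thesis
      using sq_ineq2(2)[OF M[OF z], of "\<psi> z" "\<phi> z"] unfolding E_def E'_def
      by (simp add: algebra_simps)
  qed
  have "E (-1) \<le> 0"
    by (rule gronwall_back[of "-1" 1 E E' "1+M" x0, OF d ge]) (use x0 in \<open>auto simp: E_def\<close>)
  moreover have "E (-1) = 1" using s unfolding sol_def E_def by simp
  ultimately show False by simp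
qed

lemma sol_lip:
  assumes s1: "sol p1 \<phi>1 \<psi>1" and s2: "sol p2 \<phi>2 \<psi>2"
    and M: "\<And>t. t\<in>{-1..1} \<Longrightarrow> \<bar>p1 t\<bar> \<le> M"
    and B: "\<And>t. t\<in>{-1..1} \<Longrightarrow> \<bar>\<phi>2 t\<bar> \<le> B"
    and r: "\<And>t. t\<in>{-1..1} \<Longrightarrow> p1 t - p2 t = r"
    and x: "x \<in> {-1..1}"
  shows "\<bar>\<phi>1 x - \<phi>2 x\<bar> \<le> \<bar>r\<bar> * B * exp (2+M)"
proof -
  have M0: "M \<ge> 0" using M[of 0] by simp
  have B0: "B \<ge> 0" using B[of 0] by simp
  define K where "K = 2 + M"
  define c where "c = r^2 * B^2"
  have K: "K > 0" "K \<ge> 1" unfolding K_def using M0 by auto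
  have c: "c \<ge> 0" unfolding c_def by simp
  define E where "E x = (\<phi>1 x - \<phi>2 x)^2 + (\<psi>1 x - \<psi>2 x)^2" for x
  define E' where "E' z = 2*(\<phi>1 z - \<phi>2 z)*(\<psi>1 z - \<psi>2 z) + 2*(\<psi>1 z - \<psi>2 z)*(p1 z * \<phi>1 z - p2 z * \<phi>2 z)" for z
  have "E x + c/K \<le> (E (-1) + c/K) * exp (K*(x-(-1)))"
  proof (rule gronwall[where E'=E', OF K(1) c])
    fix z :: real assume z: "z \<in> {-1..1}"
    have d1: "(\<phi>1 has_real_derivative \<psi>1 z) (at z within {-1..1})" and d2: "(\<psi>1 has_real_derivative p1 z * \<phi>1 z) (at z within {-1..1})"
      and d3: "(\<phi>2 has_real_derivative \<psi>2 z) (at z within {-1..1})" and d4: "(\<psi>2 has_real_derivative p2 z * \<phi>2 z) (at z within {-1..1})"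
      using s1 s2 z unfolding sol_def by auto
    show "(E has_real_derivative E' z) (at z within {-1..1})"
      unfolding E_def E'_def
      by (rule derivative_eq_intros d1 d2 d3 d4 refl | simp)+ (simp add: algebra_simps)
    define u where "u = \<phi>1 z - \<phi>2 z"
    define w where "w = \<psi>1 z - \<psi>2 z"
    have eq: "p1 z * \<phi>1 z - p2 z * \<phi>2 z = p1 z * u + r * \<phi>2 z"
      using r[OF z] unfolding u_def by (simp add: algebra_simps)
    have i1: "2*u*w \<le> u^2+w^2" by (rule sq_ineq1)
    have i2: "2*p1 z*w*u \<le> M*(w^2+u^2)" by (rule sq_ineq2(1)[OF M[OF z]])
    have i3: "2*w*(r*\<phi>2 z) \<le> w^2 + (r*\<phi>2 z)^2" using sq_ineq1[of w "r*\<phi>2 z"] by (simp add: algebra_simps)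
    have i4: "(r*\<phi>2 z)^2 \<le> c"
    proof -
      have "\<bar>r*\<phi>2 z\<bar> \<le> \<bar>r*B\<bar>" using B[OF z] B0 by (simp add: abs_mult mult_left_mono)
      then show ?thesis unfolding c_def by (simp add: abs_le_square_iff power_mult_distrib)
    qed
    have "E' z = 2*u*w + 2*p1 z*w*u + 2*w*(r*\<phi>2 z)" unfolding E'_def eq u_def w_def by (simp add: algebra_simps)
    also have "\<dots> \<le> (u^2+w^2) + M*(w^2+u^2) + (w^2 + c)" using i1 i2 i3 i4 by linarith
    also have "\<dots> \<le> K * E z + c" unfolding K_def E_def u_def[symmetric] w_def[symmetric]
      using sum_squares_ge_zero[of u 0] by (simp add: algebra_simps power2_eq_square)
    finally show "E' z \<le> K * E z + c" .
  qed (use x in auto)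
  moreover have "E (-1) = 0" using s1 s2 unfolding sol_def E_def by simp
  moreover have "c/K \<ge> 0" using c K by simp
  ultimately have "E x \<le> c/K * exp (K*(x+1))" by (simp add: algebra_simps)
  also have "\<dots> \<le> c/K * exp (K*2)" using x K c by (intro mult_left_mono exp_le_cancel_iff[THEN iffD2]) auto
  also have "\<dots> = c * exp (K*2) / K" by simp
  also have "\<dots> \<le> c * exp (K*2) / 1"
    by (rule divide_left_mono) (use K c in auto)
  also have "\<dots> = (\<bar>r\<bar> * B * exp K)^2" unfolding c_def
    by (simp add: power2_eq_square exp_add[symmetric] algebra_simps)
  finally have "(\<phi>1 x - \<phi>2 x)^2 \<le> (\<bar>r\<bar> * B * exp K)^2" unfolding E_def
    using zero_le_power2[of "\<psi>1 x - \<psi>2 x"] by linarith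
  then show ?thesis unfolding K_def using B0 by (simp add: abs_le_square_iff[symmetric])
qed



lemma deriv_cont:
  fixes f :: "real \<Rightarrow> real"
  assumes d: "\<And>z. z\<in>{a..b} \<Longrightarrow> (f has_real_derivative f' z) (at z within S)" and S: "{a..b} \<subseteq> S"
  shows "continuous_on {a..b} f"
  unfolding continuous_on_eq_continuous_within
proof
  fix z assume z: "z \<in> {a..b}"
  have "continuous (at z within S) f" using d[OF z] by (rule DERIV_continuous)
  then show "continuous (at z within {a..b}) f" by (rule continuous_within_subset) (use S in auto)
qed

lemma deriv_interior:
  assumes "(f has_real_derivative D) (at z within {-1..1})" "-1 < z" "z < 1"
  shows "(f has_real_derivative D) (at z)"
proof -
  have "z \<in> interior {-1..1::real}" using assms by simp
  then show ?thesis using assms(1) at_within_interior by metis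
qed

lemma first_zero:
  fixes f :: "real \<Rightarrow> real"
  assumes c: "continuous_on {a..b} f" and ab: "a \<le> b" and fa: "f a > 0" and fb: "f b \<le> 0"
  shows "\<exists>z\<in>{a..b}. f z = 0 \<and> (\<forall>y\<in>{a..<z}. f y > 0)"
proof -
  define Z where "Z = {x\<in>{a..b}. f x = 0}"
  have ne: "Z \<noteq> {}" using IVT2'[of f b 0 a, OF fb _ ab c] fa unfolding Z_def by force
  have cl: "closed Z" unfolding Z_def by (rule continuous_closed_preimage_constant[OF c closed_atLeastAtMost])
  have "compact Z"
  proof -
    have "compact ({a..b} \<inter> Z)" by (rule compact_Int_closed[OF compact_Icc cl])
    moreover have "{a..b} \<inter> Z = Z" unfolding Z_def by auto
    ultimately show ?thesis by simp
  qed
  then obtain z where z: "z \<in> Z" "\<forall>t\<in>Z. z \<le> t" using compact_attains_inf[OF _ ne] by blast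
  have "\<forall>y\<in>{a..<z}. f y > 0"
  proof (rule ccontr)
    assume "\<not> ?thesis"
    then obtain y where y: "y \<in> {a..<z}" "f y \<le> 0" by force
    have cy: "continuous_on {a..y} f" by (rule continuous_on_subset[OF c]) (use y z in \<open>auto simp: Z_def\<close>)
    obtain w where w: "a \<le> w" "w \<le> y" "f w = 0" using IVT2'[of f y 0 a, OF y(2) _ _ cy] fa y by force
    then have "w \<in> Z" using y z unfolding Z_def by auto
    then show False using z w y by force
  qed
  then show ?thesis using z unfolding Z_def by blast
qed

lemma last_zero:
  fixes f :: "real \<Rightarrow> real"
  assumes c: "continuous_on {a..b} f" and ab: "a \<le> b" and fa: "f a \<le> 0" and fb: "f b > 0"
  shows "\<exists>z\<in>{a..b}. f z = 0 \<and> (\<forall>y\<in>{z<..b}. f y > 0)"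
proof -
  define g where "g x = f (-x)" for x
  have cg: "continuous_on {-b..-a} g" unfolding g_def
    by (rule continuous_on_compose2[OF c]) (auto intro!: continuous_intros)
  obtain z where z: "z \<in> {-b..-a}" "g z = 0" "\<forall>y\<in>{-b..<z}. g y > 0"
    using first_zero[OF cg _ _ _] ab fa fb unfolding g_def by force
  show ?thesis
  proof (rule bexI[of _ "-z"], intro conjI ballI)
    show "f (-z) = 0" using z unfolding g_def by simp
    fix y assume "y \<in> {-z<..b}"
    then have "-y \<in> {-b..<z}" by auto
    then show "f y > 0" using z(3) unfolding g_def by (metis minus_minus)
  qed (use z in auto)
qed

lemma wronski:
  fixes \<phi> \<phi>' \<psi> \<psi>' \<psi>'' q :: "real \<Rightarrow> real"
  assumes d1: "\<And>x. x\<in>{-1..1} \<Longrightarrow> (\<phi> has_real_derivative \<phi>' x) (at x within {-1..1})"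
    and d2: "\<And>x. x\<in>{-1..1} \<Longrightarrow> (\<phi>' has_real_derivative (q x - l) * \<phi> x) (at x within {-1..1})"
    and pos: "\<And>x. x\<in>{-1<..<1} \<Longrightarrow> \<phi> x > 0" and e1: "\<phi> (-1) = 0" "\<phi> 1 = 0"
    and d3: "\<And>x. x\<in>{-1..1} \<Longrightarrow> (\<psi> has_real_derivative \<psi>' x) (at x within {-1..1})"
    and d4: "\<And>x. x\<in>{-1..1} \<Longrightarrow> (\<psi>' has_real_derivative \<psi>'' x) (at x within {-1..1})"
    and eq: "\<And>x. x\<in>{-1..1} \<Longrightarrow> \<psi>'' x = q x * \<psi> x - m * \<psi> x"
    and e2: "\<psi> (-1) = 0" "\<psi> 1 = 0"
    and x0: "x0 \<in> {-1..1}" "\<psi> x0 > 0"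
  shows "l \<le> m"
proof (rule ccontr)
  assume lm: "\<not> l \<le> m"
  have phinn: "\<phi> x \<ge> 0" if "x \<in> {-1..1}" for x
    using pos[of x] e1 that by (cases "x = -1 \<or> x = 1") (auto simp: less_eq_real_def)
  have cpsi: "continuous_on {-1..1} \<psi>" by (rule deriv_cont[OF d3]) auto
  obtain a where a: "a \<in> {-1..x0}" "\<psi> a = 0" "\<forall>y\<in>{a<..x0}. \<psi> y > 0"
    using last_zero[of "-1" x0 \<psi>] continuous_on_subset[OF cpsi, of "{-1..x0}"] x0 e2 by force
  obtain b where b: "b \<in> {x0..1}" "\<psi> b = 0" "\<forall>y\<in>{x0..<b}. \<psi> y > 0"
    using first_zero[of x0 1 \<psi>] continuous_on_subset[OF cpsi, of "{x0..1}"] x0 e2 by force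
  have ax: "a < x0" using a x0 by (cases "a = x0") auto
  have bx: "x0 < b" using b x0 by (cases "b = x0") auto
  have pab: "\<psi> y > 0" if "a < y" "y < b" for y
    using a(3) b(3) that by (cases "y \<le> x0") auto
  have da: "\<psi>' a \<ge> 0"
  proof (rule ccontr)
    assume "\<not> \<psi>' a \<ge> 0"
    then obtain d where d: "d > 0" "\<forall>h>0. a + h \<in> {-1..1} \<longrightarrow> h < d \<longrightarrow> \<psi> a > \<psi> (a + h)"
      using has_real_derivative_neg_dec_right[OF d3[of a]] a x0 by force
    define h where "h = min (d/2) (x0 - a)"
    have "h > 0" "h < d" "a + h \<le> x0" using d ax unfolding h_def by auto
    then have "\<psi> a > \<psi> (a + h)" "\<psi> (a + h) > 0" using d a x0 pab[of "a+h"] bx by auto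
    then show False using a by simp
  qed
  have db: "\<psi>' b \<le> 0"
  proof (rule ccontr)
    assume "\<not> \<psi>' b \<le> 0"
    then obtain d where d: "d > 0" "\<forall>h>0. b - h \<in> {-1..1} \<longrightarrow> h < d \<longrightarrow> \<psi> (b - h) < \<psi> b"
      using has_real_derivative_pos_inc_left[OF d3[of b]] b x0 by force
    define h where "h = min (d/2) (b - x0)"
    have "h > 0" "h < d" "b - h \<ge> x0" using d bx unfolding h_def by auto
    then have "\<psi> (b - h) < \<psi> b" "\<psi> (b - h) > 0" using d b x0 pab[of "b-h"] ax by auto
    then show False using b by simp
  qed
  define W where "W x = \<psi>' x * \<phi> x - \<psi> x * \<phi>' x" for x
  have dW: "(W has_real_derivative (l - m) * \<psi> x * \<phi> x) (at x within {-1..1})" if x: "x \<in> {-1..1}" for x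
  proof -
    have "(W has_real_derivative \<psi>'' x * \<phi> x + \<psi>' x * \<phi>' x - (\<psi>' x * \<phi>' x + \<psi> x * ((q x - l) * \<phi> x))) (at x within {-1..1})"
      unfolding W_def by (rule derivative_eq_intros d1[OF x] d2[OF x] d3[OF x] d4[OF x] refl | simp)+
    then show ?thesis using eq[OF x] by (simp add: algebra_simps)
  qed
  have "W a < W b"
  proof (rule DERIV_pos_imp_increasing_open[OF _ _ deriv_cont[OF dW]])
    show "a < b" using ax bx by simp
    show "{a..b} \<subseteq> {-1..1}" using a b x0 by auto
    fix z assume z: "a < z" "z < b"
    have "-1 < z" "z < 1" using z a b by auto
    then have "(W has_real_derivative (l - m) * \<psi> z * \<phi> z) (at z)"
      using deriv_interior dW z by force
    moreover have "(l - m) * \<psi> z * \<phi> z > 0" using lm pab[OF z] pos[of z] \<open>-1 < z\<close> \<open>z < 1\<close> by simp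
    ultimately show "\<exists>y. (W has_real_derivative y) (at z) \<and> y > 0" by blast
  qed (use a b x0 in auto)
  moreover have "W a \<ge> 0" unfolding W_def using a da phinn[of a] x0 by simp
  moreover have "W b \<le> 0" unfolding W_def using b db phinn[of b] x0
    by (simp add: mult_nonpos_nonneg)
  ultimately show False by simp
qed



locale eig = fixes \<gamma> :: real and n :: nat assumes g1: "\<gamma> \<ge> 1"
begin

definition q where "q x = (real n * pi)^2 * (\<bar>x\<bar> powr (2*\<gamma>))"
definition L0 where "L0 = (real n * pi)^2 + pi^2"
definition B where "B = exp (1 + L0)"
definition Lc where "Lc = B * exp (2 + L0)"
definition dl where "dl = 1 / (2 * L0 * B)"
definition PP where "PP l = (SOME pr. sol (\<lambda>x. q x - l) (fst pr) (snd pr))" for l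
definition Phi where "Phi l = fst (PP l)" for l
definition Psi where "Psi l = snd (PP l)" for l
definition Ks where "Ks = {-1+dl..1}"
definition mf where "mf l = (INF x\<in>Ks. Phi l x)" for l

lemma q_cont: "continuous_on {-1..1} q"
  unfolding q_def using g1 by (intro continuous_intros continuous_on_powr') auto

lemma q_bnd: assumes "x \<in> {-1..1}" shows "0 \<le> q x" "q x \<le> (real n * pi)^2"
proof -
  have "\<bar>x\<bar> powr (2*\<gamma>) \<le> 1" by (rule powr_le1) (use assms g1 in auto)
  then show "0 \<le> q x" "q x \<le> (real n * pi)^2" unfolding q_def
    using mult_left_mono[of "\<bar>x\<bar> powr (2*\<gamma>)" 1 "(real n * pi)^2"] by auto
qed

lemma L0_facts: "L0 > 1" "B \<ge> 1" "L0 * B \<ge> 1" "Lc > 0"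
proof -
  have "pi^2 > 1" using pi_gt3 by (simp add: power2_eq_square) (smt (verit) mult_less_cancel_left1 pi_gt3)
  then show l: "L0 > 1" unfolding L0_def by (smt (verit) zero_le_power2)
  show b: "B \<ge> 1" unfolding B_def using l by simp
  show "L0 * B \<ge> 1" using l b by (smt (verit) mult_le_cancel_left1)
  show "Lc > 0" unfolding Lc_def B_def by simp
qed

lemma dl_facts: "dl > 0" "dl \<le> 1/2"
proof -
  show "dl > 0" unfolding dl_def using L0_facts by simp
  show "dl \<le> 1/2" unfolding dl_def using L0_facts by (simp add: field_simps)
qed

lemma pbnd: assumes "l \<in> {0..L0}" "x \<in> {-1..1}" shows "\<bar>q x - l\<bar> \<le> L0"
proof -
  have "0 \<le> pi^2" by simp
  then show ?thesis using q_bnd[OF assms(2)] assms(1) unfolding L0_def abs_le_iff atLeastAtMost_iff by linarith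
qed

lemma sol_l: "sol (\<lambda>x. q x - l) (Phi l) (Psi l)"
proof -
  have "continuous_on {-1..1} (\<lambda>x. q x - l)" using q_cont by (intro continuous_intros)
  then obtain a b where "sol (\<lambda>x. q x - l) a b" using ode_exists by blast
  then have "\<exists>pr. sol (\<lambda>x. q x - l) (fst pr) (snd pr)" by (intro exI[of _ "(a,b)"]) simp
  then show ?thesis unfolding Phi_def Psi_def PP_def by (rule someI_ex)
qed

lemma sol_l': "Phi l (-1) = 0" "Psi l (-1) = 1"
  "\<And>x. x \<in> {-1..1} \<Longrightarrow> (Phi l has_real_derivative Psi l x) (at x within {-1..1})"
  "\<And>x. x \<in> {-1..1} \<Longrightarrow> (Psi l has_real_derivative (q x - l) * Phi l x) (at x within {-1..1})"
  using sol_l[of l] unfolding sol_def by auto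

lemma Phi_cont: "continuous_on {-1..1} (Phi l)"
  by (rule deriv_cont[OF sol_l'(3)]) auto

lemma bnd: assumes "l \<in> {0..L0}" "x \<in> {-1..1}" shows "\<bar>Phi l x\<bar> \<le> B" "\<bar>Psi l x\<bar> \<le> B"
  using sol_bound[OF sol_l pbnd[OF assms(1)] assms(2)] unfolding B_def by auto

lemma lip: assumes "l \<in> {0..L0}" "m \<in> {0..L0}" "x \<in> {-1..1}"
  shows "\<bar>Phi l x - Phi m x\<bar> \<le> Lc * \<bar>l - m\<bar>"
proof -
  have "\<bar>Phi l x - Phi m x\<bar> \<le> \<bar>m - l\<bar> * B * exp (2+L0)"
    by (rule sol_lip[OF sol_l sol_l pbnd[OF assms(1)] bnd(1)[OF assms(2)] _ assms(3)]) simp_all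
  then show ?thesis unfolding Lc_def by (simp add: abs_minus_commute algebra_simps)
qed

lemma near: assumes l: "l \<in> {0..L0}" and x: "x \<in> {-1..-1+dl}" shows "Phi l x \<ge> (x+1)/2"
proof -
  have psi: "Psi l y \<ge> 1 - L0*B*(y+1)" if y: "y \<in> {-1..1}" for y
  proof -
    have "Psi l (-1) + L0*B*(-1) \<le> Psi l y + L0*B*y"
    proof (rule mono_deriv[where f="\<lambda>y. Psi l y + L0*B*y" and S="{-1..1}" and a="-1" and b=1])
      fix z :: real assume z: "z \<in> {-1..1}"
      show "((\<lambda>y. Psi l y + L0*B*y) has_real_derivative (q z - l) * Phi l z + L0*B) (at z within {-1..1})"
        by (rule derivative_eq_intros sol_l'(4)[OF z] refl | simp)+
      have "\<bar>(q z - l) * Phi l z\<bar> \<le> L0 * B" unfolding abs_mult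
        by (rule mult_mono) (use pbnd[OF l z] bnd[OF l z] in auto)
      then show "(q z - l) * Phi l z + L0*B \<ge> 0" by linarith
    qed (use y in auto)
    then show ?thesis using sol_l'(2)[of l] by (simp add: algebra_simps)
  qed
  have "Phi l (-1) - (-1)/2 \<le> Phi l x - x/2"
  proof (rule mono_deriv[where f="\<lambda>y. Phi l y - y/2" and S="{-1..1}" and a="-1" and b="-1+dl"])
    fix z :: real assume z: "z \<in> {-1..-1+dl}"
    have z1: "z \<in> {-1..1}" using z dl_facts by auto
    show "((\<lambda>y. Phi l y - y/2) has_real_derivative Psi l z - 1/2) (at z within {-1..1})"
      by (rule derivative_eq_intros sol_l'(3)[OF z1] refl | simp)+
    have "L0*B*(z+1) \<le> L0*B*dl" using z L0_facts by (intro mult_left_mono) auto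
    also have "\<dots> = 1/2" unfolding dl_def using L0_facts by simp
    finally show "Psi l z - 1/2 \<ge> 0" using psi[OF z1] by linarith
  qed (use x dl_facts in auto)
  then show ?thesis using sol_l'(1)[of l] by simp
qed

lemma Ks_ne: "Ks \<noteq> {}" and Ks_sub: "Ks \<subseteq> {-1..1}"
  unfolding Ks_def using dl_facts by auto

lemma mf_attain: assumes "l \<in> {0..L0}"
  shows "\<exists>x\<in>Ks. mf l = Phi l x" "\<And>y. y \<in> Ks \<Longrightarrow> mf l \<le> Phi l y"
proof -
  have "compact Ks" unfolding Ks_def by simp
  then obtain x where x: "x \<in> Ks" "\<forall>y\<in>Ks. Phi l x \<le> Phi l y"
    using continuous_attains_inf[OF _ Ks_ne continuous_on_subset[OF Phi_cont Ks_sub]] by blast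
  have "mf l = Phi l x" unfolding mf_def by (rule cInf_eq_minimum) (use x in auto)
  then show "\<exists>x\<in>Ks. mf l = Phi l x" "\<And>y. y \<in> Ks \<Longrightarrow> mf l \<le> Phi l y" using x by auto
qed

lemma mf_lip1: assumes "l \<in> {0..L0}" "m \<in> {0..L0}" shows "mf l \<le> mf m + Lc * \<bar>l - m\<bar>"
proof -
  obtain x where x: "x \<in> Ks" "mf m = Phi m x" using mf_attain(1)[OF assms(2)] by blast
  have "mf l \<le> Phi l x" using mf_attain(2)[OF assms(1) x(1)] .
  also have "\<dots> \<le> Phi m x + Lc * \<bar>l - m\<bar>" using lip[OF assms] x Ks_sub by force
  finally show ?thesis using x by simp
qed

lemma mf_cont: "continuous_on {0..L0} mf"
proof (rule lipschitz_on_continuous_on[of Lc], rule lipschitz_onI)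
  fix x y assume "x \<in> {0..L0}" "y \<in> {0..L0}"
  then show "dist (mf x) (mf y) \<le> Lc * dist x y"
    using mf_lip1[of x y] mf_lip1[of y x] by (simp add: dist_real_def abs_minus_commute)
qed (use L0_facts in auto)

end


context eig begin

lemma pos_left: assumes "l \<in> {0..L0}" "x \<in> {-1<..-1+dl}" shows "Phi l x > 0"
  using near[OF assms(1), of x] assms(2) by auto

lemma mf0: "mf 0 > 0"
proof -
  have l0: "(0::real) \<in> {0..L0}" using L0_facts by auto
  have "\<forall>x\<in>Ks. Phi 0 x > 0"
  proof (rule ccontr)
    assume "\<not> ?thesis"
    then obtain x1 where x1: "x1 \<in> Ks" "Phi 0 x1 \<le> 0" by force
    have p0: "Phi 0 (-1+dl) > 0" using pos_left[OF l0, of "-1+dl"] dl_facts by auto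
    have c: "continuous_on {-1+dl..x1} (Phi 0)"
      by (rule continuous_on_subset[OF Phi_cont]) (use x1 dl_facts in \<open>auto simp: Ks_def\<close>)
    obtain z where z: "z \<in> {-1+dl..x1}" "Phi 0 z = 0" "\<forall>y\<in>{-1+dl..<z}. Phi 0 y > 0"
      using first_zero[OF c _ p0 x1(2)] x1 by (auto simp: Ks_def)
    have z1: "z \<in> {-1..1}" using z x1 dl_facts by (auto simp: Ks_def)
    have nn: "Phi 0 y \<ge> 0" if y: "y \<in> {-1..z}" for y
    proof (cases "y \<le> -1+dl")
      case True then show ?thesis using near[OF l0, of y] y by auto
    next
      case False then show ?thesis using z(2) z(3)[rule_format, of y] y by (cases "y = z") auto
    qed
    have psi: "Psi 0 y \<ge> 1" if y: "y \<in> {-1..z}" for y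
    proof -
      have "Psi 0 (-1) \<le> Psi 0 y"
      proof (rule mono_deriv[where f="Psi 0" and f'="\<lambda>w. (q w - 0) * Phi 0 w" and S="{-1..1}" and a="-1" and b=z])
        fix w assume w: "w \<in> {-1..z}"
        then have w1: "w \<in> {-1..1}" using z1 by auto
        show "(Psi 0 has_real_derivative (q w - 0) * Phi 0 w) (at w within {-1..1})" by (rule sol_l'(4)[OF w1])
        show "(q w - 0) * Phi 0 w \<ge> 0" using q_bnd(1)[OF w1] nn[OF w] by simp
      qed (use y z1 in auto)
      then show ?thesis using sol_l'(2) by simp
    qed
    have "Phi 0 (-1) - (-1) \<le> Phi 0 z - z"
    proof (rule mono_deriv[where f="\<lambda>y. Phi 0 y - y" and S="{-1..1}" and a="-1" and b=z])
      fix w assume w: "w \<in> {-1..z}"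
      then have w1: "w \<in> {-1..1}" using z1 by auto
      show "((\<lambda>y. Phi 0 y - y) has_real_derivative Psi 0 w - 1) (at w within {-1..1})"
        by (rule derivative_eq_intros sol_l'(3)[OF w1] refl | simp)+
      show "Psi 0 w - 1 \<ge> 0" using psi[OF w] by simp
    qed (use z1 in auto)
    then have "z \<le> -1" using z(2) sol_l'(1) by simp
    then show False using z(1) dl_facts by auto
  qed
  then show ?thesis using mf_attain[OF l0] by force
qed

lemma mfL0: "mf L0 \<le> 0"
proof (rule ccontr)
  assume "\<not> mf L0 \<le> 0"
  then have mpos: "mf L0 > 0" by simp
  have lL: "L0 \<in> {0..L0}" using L0_facts by auto
  have pos: "Phi L0 y > 0" if "y \<in> {-1<..1}" for y
  proof (cases "y \<le> -1+dl")
    case True then show ?thesis using pos_left[OF lL, of y] that by auto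
  next
    case False then have "y \<in> Ks" using that by (auto simp: Ks_def)
    then show ?thesis using mf_attain(2)[OF lL] mpos by force
  qed
  define W where "W y = Psi L0 y * sin (pi*(y+1)) - Phi L0 y * (pi * cos (pi*(y+1)))" for y
  have "- W (-1) \<le> - W 0"
  proof (rule mono_deriv[where f="\<lambda>y. - W y" and S="{-1..1}" and a="-1" and b=0])
    fix z :: real assume z: "z \<in> {-1..0}"
    then have z1: "z \<in> {-1..1}" by auto
    have "((\<lambda>y. - W y) has_real_derivative
        - ((q z - L0) * Phi L0 z * sin (pi*(z+1)) + Psi L0 z * (cos (pi*(z+1)) * pi)
           - (Psi L0 z * (pi * cos (pi*(z+1))) + Phi L0 z * (pi * (- sin (pi*(z+1)) * pi))))) (at z within {-1..1})"
      unfolding W_def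
      by (rule derivative_eq_intros sol_l'(3)[OF z1] sol_l'(4)[OF z1] refl | simp)+
    then show "((\<lambda>y. - W y) has_real_derivative - ((q z - L0 + pi^2) * Phi L0 z * sin (pi*(z+1)))) (at z within {-1..1})"
      by (simp add: algebra_simps power2_eq_square)
    have a: "q z - L0 + pi^2 \<le> 0" using q_bnd(2)[OF z1] unfolding L0_def by simp
    have b: "Phi L0 z \<ge> 0" using pos[of z] sol_l'(1)[of L0] z by (cases "z = -1") (auto simp: less_imp_le)
    have c: "sin (pi*(z+1)) \<ge> 0" using z by (intro sin_ge_zero) auto
    have "(q z - L0 + pi^2) * (Phi L0 z * sin (pi*(z+1))) \<le> 0"
      using a b c by (simp add: mult_nonpos_nonneg)
    then show "- ((q z - L0 + pi^2) * Phi L0 z * sin (pi*(z+1))) \<ge> 0" by (simp add: mult.assoc)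
  qed auto
  moreover have "W (-1) = 0" unfolding W_def using sol_l'(1)[of L0] by simp
  moreover have "W 0 = pi * Phi L0 0" unfolding W_def by simp
  moreover have "Phi L0 0 > 0" using pos[of 0] by simp
  ultimately show False by (smt (verit) pi_gt_zero mult_pos_pos)
qed

definition Sset where "Sset = {l\<in>{0..L0}. mf l \<le> 0}"

lemma Sset_compact: "compact Sset"
proof -
  have "closed ({0..L0} \<inter> mf -` {..0})"
    by (rule continuous_closed_preimage[OF mf_cont]) auto
  moreover have "{0..L0} \<inter> mf -` {..0} = Sset" unfolding Sset_def by auto
  ultimately have "closed Sset" by simp
  moreover have "bounded Sset" unfolding Sset_def by (rule bounded_subset[of "{0..L0}"]) auto
  ultimately show ?thesis by (simp add: compact_eq_bounded_closed)
qed

definition ls where "ls = (SOME l. l \<in> Sset \<and> (\<forall>t\<in>Sset. l \<le> t))"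

lemma ls_prop: "ls \<in> Sset" "\<And>t. t \<in> Sset \<Longrightarrow> ls \<le> t"
proof -
  have ne: "Sset \<noteq> {}" using mfL0 L0_facts unfolding Sset_def by force
  have "\<exists>l. l \<in> Sset \<and> (\<forall>t\<in>Sset. l \<le> t)" using compact_attains_inf[OF Sset_compact ne] by blast
  then have "ls \<in> Sset \<and> (\<forall>t\<in>Sset. ls \<le> t)" unfolding ls_def by (rule someI_ex)
  then show "ls \<in> Sset" "\<And>t. t \<in> Sset \<Longrightarrow> ls \<le> t" by auto
qed

lemma ls_range: "ls \<in> {0..L0}" "ls > 0"
proof -
  show l: "ls \<in> {0..L0}" using ls_prop(1) unfolding Sset_def by auto
  have "ls \<noteq> 0" using ls_prop(1) mf0 unfolding Sset_def by auto
  then show "ls > 0" using l by auto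
qed

lemma below_pos: assumes l: "l \<in> {0..<ls}" and x: "x \<in> {-1<..1}" shows "Phi l x > 0"
proof -
  have l0: "l \<in> {0..L0}" using l ls_range by auto
  show ?thesis
  proof (cases "x \<le> -1+dl")
    case True then show ?thesis using pos_left[OF l0, of x] x by auto
  next
    case False then have xk: "x \<in> Ks" using x by (auto simp: Ks_def)
    have "l \<notin> Sset" using ls_prop(2)[of l] l by force
    then have "mf l > 0" using l0 unfolding Sset_def by auto
    then show ?thesis using mf_attain(2)[OF l0 xk] by simp
  qed
qed

lemma ls_nonneg: assumes x: "x \<in> {-1..1}" shows "Phi ls x \<ge> 0"
proof (cases "x = -1")
  case True then show ?thesis using sol_l'(1) by simp
next
  case False
  then have x': "x \<in> {-1<..1}" using x by auto
  show ?thesis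
  proof (rule ccontr)
    assume "\<not> ?thesis"
    then have v: "Phi ls x < 0" by simp
    define t where "t = min ls (- Phi ls x / (2*Lc))"
    have "- Phi ls x / (2*Lc) > 0" using v L0_facts by (intro divide_pos_pos) auto
    then have t: "t > 0" "t \<le> ls" "t \<le> - Phi ls x / (2*Lc)" unfolding t_def using ls_range by auto
    have l: "ls - t \<in> {0..<ls}" using t by auto
    have "Phi (ls - t) x > 0" by (rule below_pos[OF l x'])
    moreover have "\<bar>Phi (ls - t) x - Phi ls x\<bar> \<le> Lc * \<bar>ls - t - ls\<bar>"
      by (rule lip) (use l ls_range x in auto)
    moreover have "Lc * t \<le> - Phi ls x / 2"
      using mult_left_mono[OF t(3), of Lc] L0_facts by (simp add: field_simps)
    ultimately show False using t v by auto
  qed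
qed

lemma ls_interior: assumes z: "z \<in> {-1<..<1}" shows "Phi ls z > 0"
proof (rule ccontr)
  assume "\<not> ?thesis"
  then have z0: "Phi ls z = 0" using ls_nonneg[of z] z by auto
  have d1: "(Phi ls has_real_derivative Psi ls z) (at z)"
    by (rule deriv_interior[OF sol_l'(3)]) (use z in auto)
  have d2: "\<forall>y. \<bar>z - y\<bar> < min (z+1) (1-z) \<longrightarrow> Phi ls z \<le> Phi ls y"
  proof (intro allI impI)
    fix y assume "\<bar>z - y\<bar> < min (z+1) (1-z)"
    then have "y \<in> {-1..1}" by (auto simp: abs_less_iff)
    then show "Phi ls z \<le> Phi ls y" using ls_nonneg z0 by simp
  qed
  have "Psi ls z = 0" by (rule DERIV_local_min[OF d1 _ d2]) (use z in auto)
  then show False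
    using sol_no_double_zero[OF sol_l pbnd[OF ls_range(1)], of z] z z0 by auto
qed

lemma ls_end: "Phi ls 1 = 0"
proof -
  obtain x0 where x0: "x0 \<in> Ks" "mf ls = Phi ls x0" using mf_attain(1)[OF ls_range(1)] by blast
  have "Phi ls x0 \<le> 0" using x0 ls_prop(1) unfolding Sset_def by auto
  then have "Phi ls x0 = 0" using ls_nonneg[of x0] x0 Ks_sub by force
  moreover have "x0 > -1" using x0 dl_facts by (auto simp: Ks_def)
  ultimately have "\<not> x0 < 1" using ls_interior[of x0] by auto
  then have "x0 = 1" using x0 by (auto simp: Ks_def)
  then show ?thesis using \<open>Phi ls x0 = 0\<close> by simp
qed

end


context eig begin

lemma ls_eig: "is_eigenvalue \<gamma> n ls"
proof -
  have c: "continuous_on {-1..1} (\<lambda>x. (q x - ls) * Phi ls x)"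
    using q_cont Phi_cont by (intro continuous_intros)
  have nz: "\<exists>x\<in>{-1..1}. Phi ls x \<noteq> 0" using ls_interior[of 0] by (intro bexI[of _ 0]) auto
  have eq: "\<forall>x\<in>{-1..1}. - ((\<lambda>x. (q x - ls) * Phi ls x) x) + (real n * pi)^2 * (\<bar>x\<bar> powr (2 * \<gamma>)) * Phi ls x = ls * Phi ls x"
    unfolding q_def by (simp add: algebra_simps)
  have d: "\<forall>x\<in>{-1..1}. (Phi ls has_real_derivative Psi ls x) (at x within {-1..1})"
    "\<forall>x\<in>{-1..1}. (Psi ls has_real_derivative (\<lambda>x. (q x - ls) * Phi ls x) x) (at x within {-1..1})"
    using sol_l'(3,4) by auto
  show ?thesis unfolding is_eigenvalue_def
    by (rule exI[of _ "Phi ls"], rule exI[of _ "Psi ls"], rule exI[of _ "\<lambda>x. (q x - ls) * Phi ls x"])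
      (use d c sol_l'(1) ls_end nz eq in simp)
qed

lemma ls_least: assumes "is_eigenvalue \<gamma> n m" shows "ls \<le> m"
proof -
  obtain \<psi> \<psi>' \<psi>'' where d3: "\<forall>x\<in>{-1..1}. (\<psi> has_real_derivative \<psi>' x) (at x within {-1..1})"
    and d4: "\<forall>x\<in>{-1..1}. (\<psi>' has_real_derivative \<psi>'' x) (at x within {-1..1})"
    and e: "\<psi> (-1) = 0" "\<psi> 1 = 0" and nz: "\<exists>x\<in>{-1..1}. \<psi> x \<noteq> 0"
    and eq: "\<forall>x\<in>{-1..1}. - \<psi>'' x + (real n * pi)^2 * (\<bar>x\<bar> powr (2 * \<gamma>)) * \<psi> x = m * \<psi> x"
    using assms unfolding is_eigenvalue_def by blast
  obtain x0 where x0: "x0 \<in> {-1..1}" "\<psi> x0 \<noteq> 0" using nz by blast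
  have eq': "\<psi>'' x = q x * \<psi> x - m * \<psi> x" if "x \<in> {-1..1}" for x
    using eq that unfolding q_def by (auto simp: algebra_simps)
  have pos: "\<And>x. x\<in>{-1<..<1} \<Longrightarrow> Phi ls x > 0" by (rule ls_interior)
  show ?thesis
  proof (cases "\<psi> x0 > 0")
    case True
    show ?thesis
      by (rule wronski[OF sol_l'(3) sol_l'(4) pos sol_l'(1) ls_end, of \<psi> \<psi>' \<psi>'' m x0])
        (use d3 d4 eq' e x0 True in auto)
  next
    case False
    then have neg: "- \<psi> x0 > 0" using x0 by auto
    show ?thesis
    proof (rule wronski[OF sol_l'(3) sol_l'(4) pos sol_l'(1) ls_end, of "\<lambda>x. - \<psi> x" "\<lambda>x. - \<psi>' x" "\<lambda>x. - \<psi>'' x" m x0])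
      fix x :: real assume x: "x \<in> {-1..1}"
      show "((\<lambda>x. - \<psi> x) has_real_derivative - \<psi>' x) (at x within {-1..1})"
        using d3 x by (auto intro: DERIV_minus)
      show "((\<lambda>x. - \<psi>' x) has_real_derivative - \<psi>'' x) (at x within {-1..1})"
        using d4 x by (auto intro: DERIV_minus)
      show "- \<psi>'' x = q x * - \<psi> x - m * - \<psi> x" using eq'[OF x] by simp
    qed (use e x0 neg in auto)
  qed
qed

lemma lam_eq: "lam \<gamma> n = ls"
  unfolding lam_def
proof (rule the_equality)
  show "is_eigenvalue \<gamma> n ls \<and> (\<forall>m. is_eigenvalue \<gamma> n m \<longrightarrow> ls \<le> m)" using ls_eig ls_least by blast
  fix l assume "is_eigenvalue \<gamma> n l \<and> (\<forall>m. is_eigenvalue \<gamma> n m \<longrightarrow> l \<le> m)"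
  then show "l = ls" using ls_eig ls_least by force
qed

lemma lam_pos: "lam \<gamma> n > 0" using lam_eq ls_range by simp

end

lemma lam_pos: "\<gamma> \<ge> 1 \<Longrightarrow> lam \<gamma> n > 0"
  using eig.lam_pos[of \<gamma> n] eig.intro by blast



theorem mainTheorem9:
  fixes \<gamma> :: real and n :: nat and xn \<mu> C :: real and W :: "real \<Rightarrow> real"
  assumes "\<gamma> \<ge> 1" and "n \<ge> 1"
    and xn_def: "xn = (lam \<gamma> n / (real n * pi)^2) powr (1 / (2 * \<gamma>))"
    and "xn < 1"
    and mu_def: "\<mu> = min (real n * pi / (\<gamma> + 1))
                 (\<gamma> / (\<gamma> + 1) * (((real n * pi)^2 / lam \<gamma> n) powr (1/2 + 1 / (2 * \<gamma>))))"
    and C_def: "C = 2 * lam \<gamma> n * exp (\<mu> * xn powr (\<gamma> + 1)) / ((\<gamma> + 1) * \<mu> * xn powr (\<gamma> - 1/2))"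
    and W_def: "W = (\<lambda>x. C * exp (- \<mu> * x powr (\<gamma> + 1)))"
  shows "(\<forall>x\<in>{xn<..<1}. - deriv (deriv W) x + ((real n * pi)^2 * x powr (2 * \<gamma>) - lam \<gamma> n) * W x \<ge> 0)
         \<and> W 1 \<ge> 0
         \<and> deriv W xn < - sqrt xn * lam \<gamma> n"
proof -
  define L where "L = lam \<gamma> n"
  define a where "a = real n * pi"
  have g: "\<gamma> \<ge> 1" by fact
  have L: "L > 0" unfolding L_def using lam_pos[OF g] .
  have a: "a > 0" unfolding a_def using assms(2) by simp
  have xn0: "xn > 0" unfolding xn_def using L a assms(2) by (simp add: L_def a_def)
  have x2g: "xn powr (2*\<gamma>) = L / a^2"
  proof -
    have "xn powr (2*\<gamma>) = (L/a^2) powr (1/(2*\<gamma>) * (2*\<gamma>))"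
      unfolding xn_def L_def a_def by (simp add: powr_powr)
    also have "1/(2*\<gamma>) * (2*\<gamma>) = 1" using g by simp
    finally show ?thesis using L a by simp
  qed
  define X where "X = (a^2 / L) powr (1/2 + 1/(2*\<gamma>))"
  have X: "X * xn powr (\<gamma>+1) = 1"
  proof -
    have e: "1/2 + 1/(2*\<gamma>) = (\<gamma>+1)/(2*\<gamma>)" using g by (simp add: field_simps)
    have "xn powr (\<gamma>+1) = (L/a^2) powr (1/(2*\<gamma>) * (\<gamma>+1))"
      unfolding xn_def L_def a_def by (simp add: powr_powr)
    also have "1/(2*\<gamma>) * (\<gamma>+1) = (\<gamma>+1)/(2*\<gamma>)" by simp
    finally have "xn powr (\<gamma>+1) = (L/a^2) powr ((\<gamma>+1)/(2*\<gamma>))" .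
    then show ?thesis unfolding X_def e using L a by (simp add: powr_divide)
  qed
  have Xp: "X > 0" unfolding X_def using L a by simp
  have mu: "\<mu> = min (a / (\<gamma>+1)) (\<gamma>/(\<gamma>+1) * X)" unfolding mu_def X_def a_def L_def by simp
  define s where "s = \<mu> * (\<gamma>+1)"
  have mu0: "\<mu> > 0" unfolding mu using a g Xp by simp
  have s0: "s > 0" unfolding s_def using mu0 g by simp
  have sa: "s \<le> a"
  proof -
    have "\<mu> \<le> a/(\<gamma>+1)" unfolding mu by simp
    then have "\<mu> * (\<gamma>+1) \<le> a/(\<gamma>+1) * (\<gamma>+1)" by (rule mult_right_mono) (use g in simp)
    then show ?thesis unfolding s_def using g by simp
  qed
  have sg: "s * xn powr (\<gamma>+1) \<le> \<gamma>"
  proof -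
    have "\<mu> \<le> \<gamma>/(\<gamma>+1) * X" unfolding mu by simp
    then have "\<mu> * (\<gamma>+1) \<le> \<gamma>/(\<gamma>+1) * X * (\<gamma>+1)" by (rule mult_right_mono) (use g in simp)
    then have "s \<le> \<gamma> * X" unfolding s_def using g by simp
    then have "s * xn powr (\<gamma>+1) \<le> \<gamma> * X * xn powr (\<gamma>+1)" by (rule mult_right_mono) simp
    then show ?thesis using X by (simp add: mult.assoc)
  qed
  have C0: "C > 0" unfolding C_def using L mu0 g xn0 by (simp add: L_def)
  define E where "E y = exp (- \<mu> * y powr (\<gamma>+1))" for y
  define F1 where "F1 y = - C * s * y powr \<gamma> * E y" for y
  define F2 where "F2 y = - C * s * (\<gamma> * y powr (\<gamma> - 1) * E y + y powr \<gamma> * (E y * (- \<mu> * ((\<gamma>+1) * y powr \<gamma>))))" for y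
  have dW: "(W has_real_derivative F1 y) (at y)" if y: "y > 0" for y
  proof -
    have dp: "((\<lambda>y. y powr (\<gamma>+1)) has_real_derivative (\<gamma>+1) * y powr \<gamma>) (at y)"
      using has_real_derivative_powr[OF y, of "\<gamma>+1"] by simp
    have "((\<lambda>y. C * exp (- \<mu> * y powr (\<gamma> + 1))) has_real_derivative C * (exp (- \<mu> * y powr (\<gamma> + 1)) * (- \<mu> * ((\<gamma>+1) * y powr \<gamma>)))) (at y)"
      by (rule DERIV_cmult DERIV_exp[THEN DERIV_chain2] DERIV_cmult dp)+
    then show ?thesis unfolding W_def F1_def E_def s_def by (simp add: algebra_simps)
  qed
  have dF1: "(F1 has_real_derivative F2 y) (at y)" if y: "y > 0" for y
  proof -
    have dp: "((\<lambda>y. y powr (\<gamma>+1)) has_real_derivative (\<gamma>+1) * y powr \<gamma>) (at y)"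
      using has_real_derivative_powr[OF y, of "\<gamma>+1"] by simp
    have dq: "((\<lambda>y. y powr \<gamma>) has_real_derivative \<gamma> * y powr (\<gamma>-1)) (at y)"
      using has_real_derivative_powr[OF y, of "\<gamma>"] by simp
    have dE: "(E has_real_derivative E y * (- \<mu> * ((\<gamma>+1) * y powr \<gamma>))) (at y)"
      unfolding E_def by (rule DERIV_exp[THEN DERIV_chain2] DERIV_cmult dp)+
    have "((\<lambda>y. (- C * s) * (y powr \<gamma> * E y)) has_real_derivative (- C * s) * (\<gamma> * y powr (\<gamma>-1) * E y + y powr \<gamma> * (E y * (- \<mu> * ((\<gamma>+1) * y powr \<gamma>))))) (at y)"
      by (rule DERIV_cmult, rule DERIV_cong[OF DERIV_mult[OF dq dE]]) (simp add: algebra_simps)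
    then show ?thesis unfolding F1_def F2_def by (simp add: algebra_simps)
  qed
  have derW: "deriv W y = F1 y" if "y > 0" for y using dW[OF that] by (rule DERIV_imp_deriv)
  have dd: "deriv (deriv W) y = F2 y" if y: "y > 0" for y
  proof -
    have "eventually (\<lambda>z. deriv W z = F1 z) (nhds y)"
      using eventually_nhds_in_open[of "{0<..}" y] y by (auto elim!: eventually_mono intro: derW)
    then have "deriv (deriv W) y = deriv F1 y" by (rule deriv_cong_ev) simp
    also have "\<dots> = F2 y" using dF1[OF y] by (rule DERIV_imp_deriv)
    finally show ?thesis .
  qed
  have part1: "- deriv (deriv W) x + (a^2 * x powr (2 * \<gamma>) - L) * W x \<ge> 0" if x: "x \<in> {xn<..<1}" for x
  proof -
    have x0: "x > 0" using x xn0 by simp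
    have p2: "x powr (2*\<gamma>) \<ge> L/a^2" using powr_mono2[of "2*\<gamma>" xn x] x xn0 g x2g by simp
    have p1: "x powr (\<gamma>-1) \<ge> xn powr (\<gamma>-1)" using powr_mono2[of "\<gamma>-1" xn x] x xn0 g by simp
    have xx: "x powr \<gamma> * x powr \<gamma> = x powr (2*\<gamma>)" by (simp add: powr_add[symmetric])
    have WE: "W x = C * E x" unfolding W_def E_def by simp
    have eq: "- deriv (deriv W) x + (a^2 * x powr (2 * \<gamma>) - L) * W x
        = C * E x * ((a^2 - s^2) * x powr (2*\<gamma>) + s * \<gamma> * x powr (\<gamma>-1) - L)"
      unfolding dd[OF x0] F2_def WE s_def using xx[symmetric]
      by (simp add: algebra_simps power2_eq_square)
    have ss: "a^2 - s^2 \<ge> 0" using sa s0 by (simp add: power_mono)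
    have "(a^2 - s^2) * x powr (2*\<gamma>) + s * \<gamma> * x powr (\<gamma>-1) - L
        \<ge> (a^2 - s^2) * (L/a^2) + s * \<gamma> * xn powr (\<gamma>-1) - L"
    proof -
      have sg0: "s*\<gamma> \<ge> 0" using s0 g by simp
      show ?thesis using mult_left_mono[OF p2 ss] mult_left_mono[OF p1 sg0] by (simp add: mult.assoc)
    qed
    also have "(a^2 - s^2) * (L/a^2) + s * \<gamma> * xn powr (\<gamma>-1) - L = s * xn powr (\<gamma>-1) * (\<gamma> - s * xn powr (\<gamma>+1))"
    proof -
      have "xn powr (\<gamma>-1) * xn powr (\<gamma>+1) = xn powr (2*\<gamma>)" by (simp add: powr_add[symmetric])
      then show ?thesis using x2g a by (simp add: field_simps power2_eq_square)
    qed
    also have "\<dots> \<ge> 0" using s0 sg by simp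
    finally have "0 \<le> (a^2 - s^2) * x powr (2*\<gamma>) + s * \<gamma> * x powr (\<gamma>-1) - L" .
    moreover have "C * E x > 0" using C0 unfolding E_def by simp
    ultimately show ?thesis unfolding eq by simp
  qed
  have part2: "W 1 \<ge> 0" unfolding W_def using C0 by simp
  have part3: "deriv W xn < - sqrt xn * L"
  proof -
    have "deriv W xn = F1 xn" by (rule derW[OF xn0])
    also have "\<dots> = - 2 * L * (xn powr \<gamma> / xn powr (\<gamma> - 1/2))"
    proof -
      define P where "P = xn powr (\<gamma> - 1/2)"
      have P: "P > 0" unfolding P_def using xn0 by simp
      have ee: "exp (\<mu> * xn powr (\<gamma> + 1)) * E xn = 1" unfolding E_def by (simp add: exp_add[symmetric])
      have CE: "C * E xn = 2 * L / (s * P)"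
        unfolding C_def s_def L_def P_def[symmetric] using ee by (simp add: mult.commute mult.left_commute)
      have "F1 xn = - s * xn powr \<gamma> * (C * E xn)" unfolding F1_def by (simp add: algebra_simps)
      also have "\<dots> = - 2 * L * (xn powr \<gamma> / P)" unfolding CE using s0 P by (simp add: field_simps)
      finally show ?thesis unfolding P_def .
    qed
    also have "xn powr \<gamma> / xn powr (\<gamma> - 1/2) = sqrt xn"
      using xn0 by (simp add: powr_diff[symmetric] powr_half_sqrt)
    finally have "deriv W xn = - 2 * L * sqrt xn" by simp
    moreover have "sqrt xn > 0" using xn0 by simp
    ultimately show ?thesis using L by (simp add: algebra_simps)
  qed
  show ?thesis using part1 part2 part3 unfolding a_def L_def by blast
qed

end
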